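(* Let $G(z)=\sum_{n=1}^\infty\frac{i}{(z+(n-\frac12)i)^2}$, the meromorphic extension of the Cauchy transform of the logistic distribution $\mu_2(dx)=\frac{\pi}{2\cosh^2(\pi x)}dx$. Then (i) $\operatorname{Re}G(x+yi)>0$ for all $x>0$ and $y\ge-\frac12$; and (ii) $\operatorname{Im}G(yi)<0$ for all $y>-\frac12$. *)

theory Defs
  imports Complex_Main
begin

text \<open>G(z) = sum over n >= 1 of i / (z + (n - 1/2) i)^2; reindexed with n starting at 0,
  so that n - 1/2 becomes n + 1/2.\<close>
definition G :: "complex \<Rightarrow> complex" where
  "G z = (\<Sum>n. \<i> / (z + (of_nat n + 1/2) * \<i>)\<^sup>2)"

end

theory Submission
  imports Defs "HOL-Analysis.Analysis"
begin
lemma den: "(x*x - b*b)*(x*x-b*b) + 4*(b*(x*(b*x))) = ((x::real)*x+b*b)*(x*x+b*b)"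
  by algebra

lemma Re_term: "Re (\<i> / (Complex x b)\<^sup>2) = 2*x*b/(x^2+b^2)^2"
  by (simp add: Re_divide power2_eq_square cmod_def den)

lemma Im_term: "Im (\<i> / (Complex x b)\<^sup>2) = (x*x-b*b)/(x^2+b^2)^2"
  by (simp add: Im_divide power2_eq_square cmod_def den)

lemma term_eq: "Complex x y + (of_nat n + 1/2) * \<i> = Complex x (y + real n + 1/2)"
  by (simp add: complex_eq_iff)

lemma summ:
  assumes "y \<ge> -1/2"
  shows "summable (\<lambda>n. \<i> / (Complex x y + (of_nat n + 1/2) * \<i>)\<^sup>2)"
proof (rule summable_comparison_test'[of "\<lambda>n. inverse (real n ^ 2)" 1])
  show "summable (\<lambda>n. inverse (real n ^ 2))" using inverse_power_summable[of 2, where ?'a=real] by simp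
next
  fix n :: nat assume n: "n \<ge> 1"
  let ?w = "Complex x (y + real n + 1/2)"
  have b: "real n \<le> y + real n + 1/2" using assms by linarith
  have "real n \<le> \<bar>Im ?w\<bar>" using b n by simp
  also have "\<dots> \<le> norm ?w" by (rule abs_Im_le_cmod)
  finally have nw: "real n \<le> norm ?w" .
  have pos: "0 < real n" using n by simp
  have "norm (\<i> / ?w\<^sup>2) = inverse (norm ?w ^ 2)"
    by (simp only: norm_divide norm_power complex_i_not_zero norm_ii inverse_eq_divide)
  also have "\<dots> \<le> inverse (real n ^ 2)"
    proof (rule le_imp_inverse_le)
      show "real n ^ 2 \<le> norm ?w ^ 2" using nw pos by (intro power_mono) auto
      show "0 < real n ^ 2" using pos by simp
    qed
  finally show "norm (\<i> / (Complex x y + (of_nat n + 1/2) * \<i>)\<^sup>2) \<le> inverse (real n ^ 2)"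
    by (simp only: term_eq)
qed
theorem mainTheorem8:
  shows "(\<forall>x y::real. x > 0 \<and> y \<ge> -1/2 \<longrightarrow> Re (G (Complex x y)) > 0)
       \<and> (\<forall>y::real. y > -1/2 \<longrightarrow> Im (G (Complex 0 y)) < 0)"
proof safe
  fix x y :: real assume x: "x > 0" and y: "y \<ge> -1/2"
  have s: "summable (\<lambda>n. \<i> / (Complex x y + (of_nat n + 1/2) * \<i>)\<^sup>2)" using summ y .
  have "Re (G (Complex x y)) = (\<Sum>n. Re (\<i> / (Complex x y + (of_nat n + 1/2) * \<i>)\<^sup>2))"
    unfolding G_def by (rule Re_suminf[OF s])
  also have "\<dots> > 0"
  proof (rule suminf_pos2[where i=1])
    show "summable (\<lambda>n. Re (\<i> / (Complex x y + (of_nat n + 1/2) * \<i>)\<^sup>2))"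
      using summable_Re[OF s] .
  next
    fix n :: nat
    have "0 \<le> y + real n + 1/2" using y by simp
    then show "0 \<le> Re (\<i> / (Complex x y + (of_nat n + 1/2) * \<i>)\<^sup>2)"
      unfolding term_eq Re_term using x by simp
  next
    have "0 < y + real 1 + 1/2" using y by simp
    moreover have "0 < (x^2 + (y + real 1 + 1/2)^2)^2" using x by simp
    ultimately show "0 < Re (\<i> / (Complex x y + (of_nat 1 + 1/2) * \<i>)\<^sup>2)"
      unfolding term_eq Re_term using x by (simp only: of_nat_1) simp
  qed
  finally show "Re (G (Complex x y)) > 0" .
next
  fix y :: real assume y: "y > -1/2"
  have s: "summable (\<lambda>n. \<i> / (Complex 0 y + (of_nat n + 1/2) * \<i>)\<^sup>2)" using summ[of y 0] y by simp
  have "Im (G (Complex 0 y)) = (\<Sum>n. Im (\<i> / (Complex 0 y + (of_nat n + 1/2) * \<i>)\<^sup>2))"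
    unfolding G_def by (rule Im_suminf[OF s])
  also have "\<dots> = - (\<Sum>n. - Im (\<i> / (Complex 0 y + (of_nat n + 1/2) * \<i>)\<^sup>2))"
    using suminf_minus[OF summable_Im[OF s]] by simp
  also have "\<dots> < 0"
  proof -
    have "0 < (\<Sum>n. - Im (\<i> / (Complex 0 y + (of_nat n + 1/2) * \<i>)\<^sup>2))"
    proof (rule suminf_pos2[where i=0])
      show "summable (\<lambda>n. - Im (\<i> / (Complex 0 y + (of_nat n + 1/2) * \<i>)\<^sup>2))"
        using summable_minus[OF summable_Im[OF s]] .
    next
      fix n :: nat
      have "0 < y + real n + 1/2" using y by simp
      then show "0 \<le> - Im (\<i> / (Complex 0 y + (of_nat n + 1/2) * \<i>)\<^sup>2)"
        unfolding term_eq Im_term by simp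
    next
      have "0 < y + real 0 + 1/2" using y by simp
      then show "0 < - Im (\<i> / (Complex 0 y + (of_nat 0 + 1/2) * \<i>)\<^sup>2)"
        unfolding term_eq Im_term by simp
    qed
    then show ?thesis by simp
  qed
  finally show "Im (G (Complex 0 y)) < 0" .
qed

end
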